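(* Let $\mathcal K\subset\mathbb R^d$ be a convex body containing the unit ball $B_1(0)$, $h>0$, $\pi^X$ the uniform distribution on $\mathcal K$ and $\pi^Y=\pi^X*\mathcal N(0,hI_d)$, i.e. $\pi^Y(y)=\frac1{\operatorname{vol}(\mathcal K)(2\pi h)^{d/2}}\int_{\mathcal K}\exp(-\frac1{2h}|y-x|^2)\,\mathrm dx$. For $\delta>0$ let $\mathcal K_\delta=\{x\in\mathbb R^d:\operatorname{dist}(x,\mathcal K)\le\delta\}$. Then $\pi^Y(\mathcal K_\delta^c)\le\exp\big(-\frac{\delta^2}{2h}+\delta d\big)$. *)

theory Defs
  imports "HOL-Analysis.Analysis"
begin

definition convex_body :: "'a::euclidean_space set \<Rightarrow> bool" where
  "convex_body K \<longleftrightarrow> convex K \<and> compact K \<and> interior K \<noteq> {}"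

definition piY_density :: "'a::euclidean_space set \<Rightarrow> real \<Rightarrow> 'a \<Rightarrow> ennreal" where
  "piY_density K h y =
     (\<integral>\<^sup>+ x. indicator K x * ennreal (exp (- (norm (y - x))\<^sup>2 / (2 * h))) \<partial>lborel)
     / (emeasure lborel K * ennreal ((2 * pi * h) powr (real DIM('a) / 2)))"

definition piY :: "'a::euclidean_space set \<Rightarrow> real \<Rightarrow> 'a set \<Rightarrow> ennreal" where
  "piY K h A = (\<integral>\<^sup>+ y. indicator A y * piY_density K h y \<partial>lborel)"

definition enlarge :: "'a::euclidean_space set \<Rightarrow> real \<Rightarrow> 'a set" where
  "enlarge K \<delta> = {x. infdist x K \<le> \<delta>}"

end

theory Submission
  imports Defs "HOL-Probability.Probability"
begin

lemma nn_integral_translate: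
  fixes c :: "'a::euclidean_space"
  assumes [measurable]: "f \<in> borel_measurable borel"
  shows "(\<integral>\<^sup>+x. f (c + x) \<partial>lborel) = (\<integral>\<^sup>+x. f x \<partial>lborel)"
proof -
  have "(\<integral>\<^sup>+x. f (c + x) \<partial>lborel) = (\<integral>\<^sup>+x. f x \<partial>(distr lborel borel ((+) c)))"
    by (simp add: nn_integral_distr)
  also have "\<dots> = (\<integral>\<^sup>+x. f x \<partial>lborel)" by (simp add: lborel_distr_plus)
  finally show ?thesis .
qed

lemma gauss1:
  assumes h: "h > 0"
  shows "(\<integral>\<^sup>+t. ennreal (exp (- t\<^sup>2 / (2 * h))) \<partial>lborel) = ennreal (sqrt (2 * pi * h))"
proof -
  have eq: "exp (- t\<^sup>2 / (2 * h)) = sqrt (2 * pi * h) * normal_density 0 (sqrt h) t" for t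
    using h by (simp add: normal_density_def)
  have "(\<integral>\<^sup>+t. ennreal (normal_density 0 (sqrt h) t) \<partial>lborel) = 1"
    using h by (subst nn_integral_eq_integral) (auto simp: integral_normal_moment_even[of "sqrt h" 0 0, simplified])
  have "(\<integral>\<^sup>+t. ennreal (exp (- t\<^sup>2 / (2 * h))) \<partial>lborel)
     = (\<integral>\<^sup>+t. ennreal (sqrt (2 * pi * h)) * ennreal (normal_density 0 (sqrt h) t) \<partial>lborel)"
    using h by (subst eq) (simp add: ennreal_mult)
  also have "\<dots> = ennreal (sqrt (2 * pi * h)) * (\<integral>\<^sup>+t. ennreal (normal_density 0 (sqrt h) t) \<partial>lborel)"
    by (rule nn_integral_cmult) measurable
  finally show ?thesis using \<open>_ = 1\<close> by simp
qed

lemma gaussd: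
  fixes x :: "'a::euclidean_space"
  assumes h: "h > 0"
  shows "(\<integral>\<^sup>+y. ennreal (exp (- (norm (y - x))\<^sup>2 / (2 * h))) \<partial>lborel)
     = ennreal ((2 * pi * h) powr (real DIM('a) / 2))"
proof -
  have "(\<integral>\<^sup>+y. ennreal (exp (- (norm (y - x))\<^sup>2 / (2 * h))) \<partial>lborel)
      = (\<integral>\<^sup>+y. ennreal (exp (- (norm ((x + y) - x))\<^sup>2 / (2 * h))) \<partial>lborel)"
    by (rule nn_integral_translate[symmetric]) measurable
  also have "\<dots> = (\<integral>\<^sup>+(y::'a). (\<Prod>b\<in>Basis. ennreal (exp (- (y \<bullet> b)\<^sup>2 / (2 * h)))) \<partial>lborel)"
  proof (rule nn_integral_cong)
    fix y :: 'a
    have "(norm y)\<^sup>2 = (\<Sum>b\<in>Basis. (y \<bullet> b)\<^sup>2)"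
      unfolding power2_norm_eq_inner by (subst euclidean_inner) (simp add: power2_eq_square)
    then have "- (norm y)\<^sup>2 / (2 * h) = (\<Sum>b\<in>Basis. - (y \<bullet> b)\<^sup>2 / (2 * h))"
      by (simp add: sum_divide_distrib sum_negf)
    then show "ennreal (exp (- (norm ((x + y) - x))\<^sup>2 / (2 * h))) = (\<Prod>b\<in>Basis. ennreal (exp (- (y \<bullet> b)\<^sup>2 / (2 * h))))"
      by (simp add: exp_sum prod_ennreal)
  qed
  also have "\<dots> = (\<Prod>b\<in>(Basis::'a set). (\<integral>\<^sup>+t. ennreal (exp (- t\<^sup>2 / (2 * h))) \<partial>lborel))"
    by (rule nn_integral_lborel_prod[where f="\<lambda>b t. ennreal (exp (- t\<^sup>2 / (2 * h)))"]) auto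
  also have "\<dots> = ennreal (sqrt (2 * pi * h)) ^ DIM('a)"
    using gauss1[OF h] by simp
  also have "\<dots> = ennreal ((2 * pi * h) powr (real DIM('a) / 2))"
    using h by (simp add: ennreal_power sqrt_def root_powr_inverse powr_realpow[symmetric] powr_powr)
  finally show ?thesis .
qed

lemma key_ineq:
  fixes w u :: "'a::euclidean_space"
  assumes wu: "w \<bullet> u \<le> 0" and r: "norm w > \<delta>" and d: "\<delta> > 0"
  shows "(norm (w - u))\<^sup>2 \<ge> \<delta>\<^sup>2 + (norm (w - u - (\<delta> / norm w) *\<^sub>R w))\<^sup>2"
proof -
  define r where "r = norm w"
  define t where "t = \<delta> / r"
  have rpos: "r > 0" using r d unfolding r_def by linarith
  have ww: "w \<bullet> w = r\<^sup>2" by (simp add: r_def power2_norm_eq_inner)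
  have "(norm (w - u - t *\<^sub>R w))\<^sup>2 = (norm (w - u))\<^sup>2 - 2 * t * (w \<bullet> w) + 2 * t * (w \<bullet> u) + t\<^sup>2 * (w \<bullet> w)"
    unfolding power2_norm_eq_inner by (simp add: inner_diff_left inner_diff_right inner_commute algebra_simps power2_eq_square)
  also have "\<dots> \<le> (norm (w - u))\<^sup>2 - 2 * t * r\<^sup>2 + t\<^sup>2 * r\<^sup>2"
  proof -
    have "t * (w \<bullet> u) \<le> 0" using wu rpos d unfolding t_def by (simp add: divide_nonpos_pos mult_nonneg_nonpos)
    then show ?thesis by (simp add: ww)
  qed
  finally have A: "(norm (w - u - t *\<^sub>R w))\<^sup>2 \<le> (norm (w - u))\<^sup>2 - 2 * t * r\<^sup>2 + t\<^sup>2 * r\<^sup>2" .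
  have B: "- 2 * t * r\<^sup>2 + t\<^sup>2 * r\<^sup>2 = - 2 * \<delta> * r + \<delta>\<^sup>2"
    using rpos by (simp add: t_def power2_eq_square field_simps)
  have "(norm (w - u - t *\<^sub>R w))\<^sup>2 \<le> (norm (w - u))\<^sup>2 - 2 * \<delta> * r + \<delta>\<^sup>2" using A B by linarith
  moreover have "2 * \<delta> * r \<ge> 2 * \<delta>\<^sup>2" using r d by (simp add: r_def power2_eq_square)
  ultimately show ?thesis by (simp add: t_def r_def)
qed

lemma scale_measure:
  fixes K :: "'a::euclidean_space set"
  assumes s: "s > 0" and [measurable]: "K \<in> sets borel"
  shows "emeasure lborel {x. (1/s) *\<^sub>R x \<in> K} = ennreal (s ^ DIM('a)) * emeasure lborel K"
proof -
  let ?S = "{x::'a. (1/s) *\<^sub>R x \<in> K}"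
  have Sm[measurable]: "?S \<in> sets borel" by measurable
  have eq: "lborel = density (distr lborel borel (\<lambda>x::'a. 0 + s *\<^sub>R x)) (\<lambda>_. \<bar>s\<bar>^DIM('a))"
    using lborel_affine[of s 0] s by simp
  have "emeasure lborel ?S = (\<integral>\<^sup>+x. indicator ?S x \<partial>lborel)" by simp
  also have "\<dots> = (\<integral>\<^sup>+x. indicator ?S x \<partial>(density (distr lborel borel (\<lambda>x::'a. 0 + s *\<^sub>R x)) (\<lambda>_. \<bar>s\<bar>^DIM('a))))"
    by (rule arg_cong[OF eq])
  also have "\<dots> = (\<integral>\<^sup>+x. ennreal (s^DIM('a)) * indicator K x \<partial>lborel)"
    using s by (simp add: nn_integral_density nn_integral_distr indicator_def of_bool_def)
  also have "\<dots> = ennreal (s ^ DIM('a)) * emeasure lborel K"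
    using s by (simp add: nn_integral_cmult)
  finally show ?thesis .
qed

lemma stepA:
  fixes K :: "'a::euclidean_space set" and y :: 'a
  assumes cK: "convex K" and kK: "compact K" and B: "cball 0 1 \<subseteq> K"
    and h: "h > 0" and d: "\<delta> > 0" and y: "infdist y K > \<delta>"
  shows "(\<integral>\<^sup>+x. indicator K x * ennreal (exp (- (norm (y - x))\<^sup>2 / (2 * h))) \<partial>lborel)
    \<le> ennreal (exp (- \<delta>\<^sup>2 / (2 * h))) *
       (\<integral>\<^sup>+x. indicator {x. (1/(1+\<delta>)) *\<^sub>R x \<in> K} x * ennreal (exp (- (norm (y - x))\<^sup>2 / (2 * h))) \<partial>lborel)"
proof -
  define s where "s = 1 + \<delta>"
  define S where "S = {x::'a. (1/s) *\<^sub>R x \<in> K}"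
  have clK: "closed K" using compact_imp_closed[OF kK] by simp
  have Km[measurable]: "K \<in> sets borel" using clK by simp
  have Sm[measurable]: "S \<in> sets borel" unfolding S_def by measurable
  have Kne: "K \<noteq> {}" using B by auto
  define p where "p = closest_point K y"
  have pK: "p \<in> K" unfolding p_def using closest_point_in_set[OF clK Kne] .
  define w where "w = y - p"
  have "infdist y K \<le> norm w" using infdist_le[OF pK, of y] by (simp add: w_def dist_norm)
  then have r: "norm w > \<delta>" using y by linarith
  then have wne: "norm w > 0" using d by linarith
  define v where "v = (\<delta> / norm w) *\<^sub>R w"
  define e where "e = exp (- \<delta>\<^sup>2 / (2 * h))"
  have pt: "indicator K x * ennreal (exp (- (norm (y - x))\<^sup>2 / (2 * h)))
      \<le> ennreal e * (indicator S (v + x) * ennreal (exp (- (norm (y - (v + x)))\<^sup>2 / (2 * h))))" for x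
  proof (cases "x \<in> K")
    case False then show ?thesis by simp
  next
    case True
    have dot: "w \<bullet> (x - p) \<le> 0" unfolding w_def p_def using closest_point_dot[OF cK clK True] .
    have ki: "(norm (w - (x - p)))\<^sup>2 \<ge> \<delta>\<^sup>2 + (norm (w - (x - p) - (\<delta> / norm w) *\<^sub>R w))\<^sup>2"
      by (rule key_ineq[OF dot r d])
    have e1: "w - (x - p) = y - x" by (simp add: w_def)
    have e2: "w - (x - p) - (\<delta> / norm w) *\<^sub>R w = y - (v + x)" by (simp add: w_def v_def algebra_simps)
    have ki2: "(norm (y - x))\<^sup>2 \<ge> \<delta>\<^sup>2 + (norm (y - (v + x)))\<^sup>2" using ki[unfolded e2, unfolded e1] .
    have "- (norm (y - x))\<^sup>2 / (2 * h) \<le> - \<delta>\<^sup>2 / (2 * h) + - (norm (y - (v + x)))\<^sup>2 / (2 * h)"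
      using ki2 h by (simp add: field_simps)
    then have ex: "exp (- (norm (y - x))\<^sup>2 / (2 * h)) \<le> e * exp (- (norm (y - (v + x)))\<^sup>2 / (2 * h))"
      unfolding e_def by (simp add: exp_add[symmetric])
    have unit: "(1 / norm w) *\<^sub>R w \<in> K"
      using B wne by (auto simp: subset_iff)
    have "(1/s) *\<^sub>R x + (\<delta>/s) *\<^sub>R ((1 / norm w) *\<^sub>R w) \<in> K"
      by (rule convexD[OF cK True unit]) (use d in \<open>auto simp: s_def field_simps\<close>)
    moreover have "(1/s) *\<^sub>R (v + x) = (1/s) *\<^sub>R x + (\<delta>/s) *\<^sub>R ((1 / norm w) *\<^sub>R w)"
      by (simp add: v_def algebra_simps)
    ultimately have "v + x \<in> S" unfolding S_def by simp
    then show ?thesis using True ex by (simp add: ennreal_mult[symmetric] e_def)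
  qed
  have "(\<integral>\<^sup>+x. indicator K x * ennreal (exp (- (norm (y - x))\<^sup>2 / (2 * h))) \<partial>lborel)
     \<le> (\<integral>\<^sup>+x. ennreal e * (indicator S (v + x) * ennreal (exp (- (norm (y - (v + x)))\<^sup>2 / (2 * h)))) \<partial>lborel)"
    by (rule nn_integral_mono) (rule pt)
  also have "\<dots> = ennreal e * (\<integral>\<^sup>+x. indicator S (v + x) * ennreal (exp (- (norm (y - (v + x)))\<^sup>2 / (2 * h))) \<partial>lborel)"
    by (rule nn_integral_cmult) measurable
  also have "(\<integral>\<^sup>+x. indicator S (v + x) * ennreal (exp (- (norm (y - (v + x)))\<^sup>2 / (2 * h))) \<partial>lborel)
      = (\<integral>\<^sup>+x. indicator S x * ennreal (exp (- (norm (y - x))\<^sup>2 / (2 * h))) \<partial>lborel)"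
    by (rule nn_integral_translate[where f="\<lambda>x. indicator S x * ennreal (exp (- (norm (y - x))\<^sup>2 / (2 * h)))"]) measurable
  finally show ?thesis unfolding e_def S_def s_def .
qed

lemma Gmeas:
  fixes S :: "'a::euclidean_space set"
  assumes [measurable]: "S \<in> sets borel"
  shows "(\<lambda>y::'a. \<integral>\<^sup>+x. indicator S x * ennreal (exp (- (norm (y - x))\<^sup>2 / (2 * h))) \<partial>lborel) \<in> borel_measurable lborel"
  by measurable

lemma stepB:
  fixes S :: "'a::euclidean_space set"
  assumes [measurable]: "S \<in> sets borel" and h: "h > 0"
  shows "(\<integral>\<^sup>+y. (\<integral>\<^sup>+x. indicator S x * ennreal (exp (- (norm (y - x))\<^sup>2 / (2 * h))) \<partial>lborel) \<partial>lborel)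
    = emeasure lborel S * ennreal ((2 * pi * h) powr (real DIM('a) / 2))"
proof -
  have "(\<integral>\<^sup>+y. (\<integral>\<^sup>+x. indicator S x * ennreal (exp (- (norm (y - x))\<^sup>2 / (2 * h))) \<partial>lborel) \<partial>lborel)
    = (\<integral>\<^sup>+x. (\<integral>\<^sup>+y. indicator S x * ennreal (exp (- (norm (y - x))\<^sup>2 / (2 * h))) \<partial>lborel) \<partial>lborel)"
    by (rule lborel_pair.Fubini') measurable
  also have "\<dots> = (\<integral>\<^sup>+x. indicator S x * ennreal ((2 * pi * h) powr (real DIM('a) / 2)) \<partial>lborel)"
  proof (rule nn_integral_cong)
    fix x :: 'a
    show "(\<integral>\<^sup>+y. indicator S x * ennreal (exp (- (norm (y - x))\<^sup>2 / (2 * h))) \<partial>lborel) = indicator S x * ennreal ((2 * pi * h) powr (real DIM('a) / 2))"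
      by (subst nn_integral_cmult) (measurable, simp only: gaussd[OF h])
  qed
  also have "\<dots> = emeasure lborel S * ennreal ((2 * pi * h) powr (real DIM('a) / 2))"
    by (simp add: nn_integral_multc)
  finally show ?thesis .
qed

theorem mainTheorem9:
  fixes K :: "'a::euclidean_space set" and h \<delta> :: real
  assumes "convex_body K"
    and "cball 0 1 \<subseteq> K"
    and "h > 0"
    and "\<delta> > 0"
  shows "piY K h (- enlarge K \<delta>)
           \<le> ennreal (exp (- \<delta>\<^sup>2 / (2 * h) + \<delta> * real DIM('a)))"
proof -
  note B = assms(2) and h = assms(3) and d = assms(4)
  have cK: "convex K" and kK: "compact K" using assms(1) unfolding convex_body_def by auto
  have Km[measurable]: "K \<in> sets borel" using compact_imp_closed[OF kK] by simp
  define s where "s = 1 + \<delta>"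
  have spos: "s > 0" using d by (simp add: s_def)
  define S where "S = {x::'a. (1/(1+\<delta>)) *\<^sub>R x \<in> K}"
  have Sm[measurable]: "S \<in> sets borel" unfolding S_def by measurable
  define c where "c = (2 * pi * h) powr (real DIM('a) / 2)"
  have cpos: "c > 0" using h by (simp add: c_def)
  define v where "v = measure lborel K"
  have Kfin: "emeasure lborel K < \<infinity>" using emeasure_compact_finite[OF kK] .
  have Vv: "emeasure lborel K = ennreal v"
    unfolding v_def using Kfin by (simp add: emeasure_eq_ennreal_measure)
  have "measure lborel (cball (0::'a) 1) \<le> v"
    unfolding v_def by (rule measure_mono_fmeasurable[OF _ _ fmeasurable_compact[OF kK]]) (use B in auto)
  moreover have "measure lborel (cball (0::'a) 1) > 0"
    using content_cball_gt_0_iff[of "0::'a" 1] by simp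
  ultimately have vpos: "v > 0" by linarith
  define e where "e = exp (- \<delta>\<^sup>2 / (2 * h))"
  define k where "k = e / (v * c)"
  define G where "G = (\<lambda>y::'a. \<integral>\<^sup>+x. indicator S x * ennreal (exp (- (norm (y - x))\<^sup>2 / (2 * h))) \<partial>lborel)"
  have Gm[measurable]: "G \<in> borel_measurable lborel" unfolding G_def by (rule Gmeas) simp
  have pt: "indicator (- enlarge K \<delta>) y * piY_density K h y \<le> G y * ennreal k" for y
  proof (cases "y \<in> enlarge K \<delta>")
    case True then show ?thesis by simp
  next
    case False
    then have y: "infdist y K > \<delta>" by (simp add: enlarge_def)
    have A: "(\<integral>\<^sup>+x. indicator K x * ennreal (exp (- (norm (y - x))\<^sup>2 / (2 * h))) \<partial>lborel) \<le> ennreal e * G y"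
      using stepA[OF cK kK B h d y] unfolding G_def S_def e_def .
    have "piY_density K h y = (\<integral>\<^sup>+x. indicator K x * ennreal (exp (- (norm (y - x))\<^sup>2 / (2 * h))) \<partial>lborel) * ennreal (1 / (v * c))"
    proof -
      have m: "ennreal v * ennreal c = ennreal (v * c)" using vpos cpos by (simp add: ennreal_mult)
      have i: "inverse (ennreal (v * c)) = ennreal (1 / (v * c))"
        using inverse_ennreal[of "v * c"] vpos cpos by (simp add: inverse_eq_divide)
      show ?thesis unfolding piY_density_def Vv c_def[symmetric] divide_ennreal_def m i ..
    qed
    also have "\<dots> \<le> ennreal e * G y * ennreal (1 / (v * c))"
      by (rule mult_right_mono[OF A]) simp
    also have "\<dots> = G y * ennreal k"
      using vpos cpos unfolding k_def e_def
      by (simp add: ennreal_mult[symmetric] mult_ac)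
    finally show ?thesis using False by simp
  qed
  have "piY K h (- enlarge K \<delta>) \<le> (\<integral>\<^sup>+y. G y * ennreal k \<partial>lborel)"
    unfolding piY_def by (rule nn_integral_mono) (rule pt)
  also have "\<dots> = (\<integral>\<^sup>+y. G y \<partial>lborel) * ennreal k"
    by (rule nn_integral_multc) (rule Gm)
  also have "(\<integral>\<^sup>+y. G y \<partial>lborel) = emeasure lborel S * ennreal c"
    unfolding G_def c_def by (rule stepB[OF Sm h])
  also have "emeasure lborel S = ennreal (s ^ DIM('a)) * ennreal v"
    unfolding S_def s_def using scale_measure[OF _ Km, of "1 + \<delta>"] d Vv by simp
  also have "ennreal (s ^ DIM('a)) * ennreal v * ennreal c * ennreal k = ennreal (s ^ DIM('a) * e)"
    using vpos cpos spos unfolding k_def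
    by (simp add: ennreal_mult[symmetric] e_def field_simps)
  also have "\<dots> \<le> ennreal (exp (- \<delta>\<^sup>2 / (2 * h) + \<delta> * real DIM('a)))"
  proof (rule ennreal_leI)
    have "s ^ DIM('a) \<le> exp \<delta> ^ DIM('a)"
      using spos by (intro power_mono) (simp_all add: s_def exp_ge_add_one_self)
    also have "\<dots> = exp (\<delta> * real DIM('a))" by (simp add: exp_of_nat_mult[symmetric] mult.commute)
    finally have sd: "s ^ DIM('a) \<le> exp (\<delta> * real DIM('a))" .
    have "s ^ DIM('a) * e \<le> exp (\<delta> * real DIM('a)) * e"
      using sd by (rule mult_right_mono) (simp add: e_def)
    also have "\<dots> = exp (- \<delta>\<^sup>2 / (2 * h) + \<delta> * real DIM('a))"
      unfolding e_def exp_add by (rule mult.commute)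
    finally show "s ^ DIM('a) * e \<le> exp (- \<delta>\<^sup>2 / (2 * h) + \<delta> * real DIM('a))" .
  qed
  finally show ?thesis .
qed

end
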